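(* Let $\hat\Psi\in C_0^\infty(\mathbb R^3)$ be nonnegative, not identically zero, even ($\hat\Psi(-\xi)=\hat\Psi(\xi)$), with $\operatorname{supp}\hat\Psi\subseteq\{\xi\in\mathbb R^3: 1/2<|\xi|<1,\ |\xi_1|\ge1/2\}$. For $t>0$ and $\xi=(\xi_1,\xi_2,\xi_3)$ set $\xi_t=(\xi_1,t^{1/4}\xi_2,t^{1/4}\xi_3)$. Then there exists a constant $C>0$ such that for all sufficiently large $t$, $$\big\|\mathcal F^{-1}\big[e^{t\lambda_\pm(\xi)}\hat\Psi(t^{1/2}\xi_t)\big]\big\|_{L^\infty}\ge Ct^{-2}$$ (for each choice of sign).
   Context: For $|\xi|<2$, $\lambda_\pm(\xi)=-\frac{|\xi|^2}{2}\big(1\pm i\sqrt{4/|\xi|^2-1}\big)$ (note the function $\hat\Psi(t^{1/2}\xi_t)$ is supported in $|\xi|<t^{-1/2}$ for $t\ge1$). Fourier transform convention: $\hat f(\xi)=(2\pi)^{-3/2}\int_{\mathbb R^3}e^{-ix\cdot\xi}f(x)\,dx$, $\mathcal F^{-1}[g](x)=(2\pi)^{-3/2}\int e^{ix\cdot\xi}g(\xi)\,d\xi$. *)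

theory Defs
  imports "HOL-Analysis.Analysis" "HOL-Probability.Essential_Supremum"
begin

coinductive smooth_fun :: "('a::euclidean_space \<Rightarrow> real) \<Rightarrow> bool" where
  "f differentiable_on UNIV \<Longrightarrow>
   (\<forall>b\<in>Basis. smooth_fun (\<lambda>x. frechet_derivative f (at x) b)) \<Longrightarrow> smooth_fun f"

definition tsupp :: "('a::topological_space \<Rightarrow> real) \<Rightarrow> 'a set" where
  "tsupp f = closure {x. f x \<noteq> 0}"

text \<open>Eigenvalues lambda_sigma, sigma = 1 for +, sigma = -1 for -.\<close>
definition lam :: "real \<Rightarrow> real^3 \<Rightarrow> complex" where
  "lam \<sigma> \<xi> = (if norm \<xi> < 2
     then - complex_of_real (norm \<xi> ^ 2 / 2) * (1 + complex_of_real \<sigma> * \<i> * complex_of_real (sqrt (4 / norm \<xi> ^ 2 - 1)))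
     else - complex_of_real (norm \<xi> ^ 2 / 2) * (1 + complex_of_real (\<sigma> * sqrt (1 - 4 / norm \<xi> ^ 2))))"

definition aniso :: "real \<Rightarrow> real^3 \<Rightarrow> real^3" where
  "aniso t \<xi> = vector [\<xi>$1, t powr (1/4) * \<xi>$2, t powr (1/4) * \<xi>$3]"

definition invFT :: "(real^3 \<Rightarrow> complex) \<Rightarrow> real^3 \<Rightarrow> complex" where
  "invFT g x = complex_of_real ((2 * pi) powr (-3/2)) *
     (LINT \<xi>|lborel. cis (x \<bullet> \<xi>) * g \<xi>)"

definition Linf_norm :: "(real^3 \<Rightarrow> complex) \<Rightarrow> ereal" where
  "Linf_norm f = esssup lborel (\<lambda>x. ereal (norm (f x)))"

end

theory Submission
  imports Defs
begin


lemma ess_lower: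
  fixes f :: "real^3 \<Rightarrow> complex"
  assumes rho: "\<rho> > 0" and H: "\<And>y. norm y < \<rho> \<Longrightarrow> c \<le> norm (f (b0 + y)) \<or> c \<le> norm (f (b1 + y))"
  shows "ereal c \<le> esssup lborel (\<lambda>x. ereal (norm (f x)))"
proof (rule ccontr)
  assume "\<not> ereal c \<le> esssup lborel (\<lambda>x. ereal (norm (f x)))"
  hence lt: "esssup lborel (\<lambda>x. ereal (norm (f x))) < ereal c" by simp
  have "AE x in lborel. norm (f x) < c"
    using esssup_AE[where M=lborel and f="\<lambda>x. ereal (norm (f x))"] lt
    by (auto elim!: eventually_mono dest: order.strict_trans1)
  then obtain N where N: "N \<in> null_sets lborel" "{x \<in> space lborel. \<not> norm (f x) < c} \<subseteq> N"
    by (auto elim!: AE_E simp: null_sets_def)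
  have N0: "{x. x - (- b0) \<in> N} \<in> null_sets lborel" "{x. x - (- b1) \<in> N} \<in> null_sets lborel"
    using null_sets_translation[OF N(1), of "- b0"] null_sets_translation[OF N(1), of "- b1"] by auto
  have sub: "ball 0 \<rho> \<subseteq> {x. x - (- b0) \<in> N} \<union> {x. x - (- b1) \<in> N}"
  proof
    fix y assume "y \<in> ball (0::real^3) \<rho>"
    hence "norm y < \<rho>" by simp
    from H[OF this] have "b0 + y \<in> N \<or> b1 + y \<in> N" using N(2) by (auto simp: not_less)
    then show "y \<in> {x. x - (- b0) \<in> N} \<union> {x. x - (- b1) \<in> N}"
      by (auto simp: add.commute)
  qed
  have "ball (0::real^3) \<rho> \<in> null_sets lborel"
    by (rule null_sets_subset[OF null_sets.Un[OF N0] _ sub]) simp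
  hence "measure lborel (ball (0::real^3) \<rho>) = 0"
    by (simp add: measure_eq_0_null_sets)
  with rho show False by simp
qed




lemma cos_lb: "1 - x^2/2 \<le> cos (x::real)"
proof -
  have "cos x = cos (2 * (x/2))" by simp
  also have "\<dots> = 1 - 2 * sin (x/2) ^ 2" by (rule cos_double_sin)
  finally have c: "cos x = 1 - 2 * sin (x/2) ^ 2" .
  have "\<bar>sin (x/2)\<bar> \<le> \<bar>x/2\<bar>" by (rule abs_sin_x_le_abs_x)
  hence "sin (x/2) ^ 2 \<le> (x/2)^2"
    by (metis abs_le_square_iff)
  thus ?thesis using c by (simp add: power_divide)
qed

lemma K_bound:
  fixes u \<psi> :: real
  assumes u: "1/2 \<le> u" "u \<le> 1" and psi: "\<bar>\<psi>\<bar> \<le> 4/5"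
  shows "Re ((1 + \<i> * cis (- (2*pi/3) * u)) * cis \<psi>) - norm (1 + \<i> * cis ((2*pi/3) * u)) \<ge> 1/4"
proof -
  define \<alpha> where "\<alpha> = - (2*pi/3) * u"
  have pi1: "pi > 3.14" using pi_approx by simp
  have pi2: "pi < 3.1416" using pi_approx by simp
  have a1: "\<bar>\<alpha> + pi/2\<bar> \<le> pi/6" using u unfolding \<alpha>_def by (auto simp: abs_le_iff field_simps)
  have re: "Re ((1 + \<i> * cis \<alpha>) * cis \<psi>) = cos \<psi> + cos (\<alpha> + \<psi> + pi/2)"
    by (simp add: algebra_simps cos_add sin_add)
  have "norm (1 + \<i> * cis (-\<alpha>)) ^ 2 = (1 - sin (-\<alpha>))^2 + (cos (-\<alpha>))^2"
    by (simp add: cmod_def)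
  also have "\<dots> = 2 - 2 * sin (-\<alpha>)" using sin_cos_squared_add[of "-\<alpha>"] by (simp add: power2_eq_square algebra_simps)
  also have "sin (-\<alpha>) = cos (\<alpha> + pi/2)" by (simp add: cos_add)
  finally have n2: "norm (1 + \<i> * cis (-\<alpha>)) ^ 2 = 2 - 2 * cos (\<alpha> + pi/2)" .
  have "2 - 2 * cos (\<alpha> + pi/2) \<le> (\<alpha> + pi/2)^2" using cos_lb[of "\<alpha> + pi/2"] by simp
  also have "\<dots> \<le> (pi/6)^2" using a1 by (metis abs_le_square_iff abs_of_nonneg pi_ge_zero divide_nonneg_pos zero_less_numeral abs_ge_zero)
  finally have "norm (1 + \<i> * cis (-\<alpha>)) ^ 2 \<le> (pi/6)^2" using n2 by simp
  hence n: "norm (1 + \<i> * cis (-\<alpha>)) \<le> pi/6"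
    using power2_le_imp_le[of "norm (1 + \<i> * cis (-\<alpha>))" "pi/6"] by simp
  have b1: "\<bar>\<alpha> + \<psi> + pi/2\<bar> \<le> pi/6 + 4/5" using a1 psi by linarith
  have "(\<alpha> + \<psi> + pi/2)^2 \<le> (pi/6 + 4/5)^2"
    using b1 by (metis abs_le_square_iff abs_of_nonneg add_nonneg_nonneg pi_ge_zero divide_nonneg_pos zero_less_numeral abs_ge_zero zero_le_divide_iff zero_le_numeral)
  moreover have "\<psi>^2 \<le> (4/5)^2" using psi by (metis abs_le_square_iff abs_of_nonneg zero_le_divide_iff zero_le_numeral)
  moreover have "(pi/6 + 4/5)^2 \<le> (3.1416/6 + 4/5)^2" using pi2 by (intro power_mono) auto
  ultimately have "cos \<psi> + cos (\<alpha> + \<psi> + pi/2) - pi/6 \<ge> 1/4"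
    using cos_lb[of \<psi>] cos_lb[of "\<alpha> + \<psi> + pi/2"] pi2 by (simp add: power2_eq_square) 
  thus ?thesis using re n unfolding \<alpha>_def by (simp add: mult.commute)
qed




lemma phase_bound:
  fixes T a q r :: real
  assumes T: "T \<ge> 1" and a: "a > 0" "T*a \<ge> 1/2" and q: "q \<ge> 0"
    and sup: "T^2*a^2 + T^3*q < 1" and r: "r \<ge> 0" "r^2 = a^2 + q"
  shows "\<bar>T^2*a - T^2 * (r^2/2) * sqrt (4/r^2 - 1)\<bar> \<le> 3/4" "T^2*r^2 < 1" "r < 1" "r > 0"
proof -
  have "T^2 * q \<le> T^3 * q" using T q by (simp add: mult_right_mono power_increasing)
  hence tr: "T^2*r^2 < 1" using sup r by (simp add: algebra_simps)
  thus "T^2*r^2 < 1" .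
  have "T^2 \<ge> 1" using T by simp
  hence r2: "r^2 < 1" using tr r
    by (smt (verit) mult_le_cancel_right1 zero_le_power2)
  thus r1: "r < 1" using r by (smt (verit) one_le_power)
  have ar: "a \<le> r" using r a q by (smt (verit) power_mono real_sqrt_le_iff real_sqrt_unique)
  thus rpos: "r > 0" using a by simp
  define A where "A = T^2 * r"
  define \<Phi> where "\<Phi> = T^2 * (r^2/2) * sqrt (4/r^2 - 1)"
  have A0: "A \<ge> 0" unfolding A_def using r by simp
  have s0: "4/r^2 - 1 \<ge> 0" using r2 rpos by (simp add: field_simps)
  have P0: "\<Phi> \<ge> 0" unfolding \<Phi>_def using s0 by simp
  have "\<Phi>^2 = T^4 * (r^4/4) * (4/r^2 - 1)"
    unfolding \<Phi>_def using s0 by (simp add: power_mult_distrib power_divide)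
  also have "\<dots> = A^2 * (1 - r^2/4)"
  proof -
    have e: "r^4/4*(4/r^2 - 1) = r^2*(1 - r^2/4)" using rpos
      by (simp add: field_simps power2_eq_square power4_eq_xxxx)
    have "T^4 * (r^4/4) * (4/r^2 - 1) = T^4 * (r^2*(1 - r^2/4))" using e by (simp add: mult.assoc)
    also have "\<dots> = (T^2*r)^2 * (1 - r^2/4)" by (simp add: power_mult_distrib mult.assoc power_mult[symmetric])
    finally show ?thesis unfolding A_def .
  qed
  finally have P2: "\<Phi>^2 = A^2 * (1 - r^2/4)" .
  have k: "0 \<le> 1 - r^2/4" "1 - r^2/4 \<le> 1" using r2 by auto
  have "\<Phi>^2 \<le> A^2" unfolding P2 by (rule mult_left_le[OF k(2)]) simp
  hence PA: "\<Phi> \<le> A" by (rule power2_le_imp_le[OF _ A0])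
  have "(A * (1 - r^2/4))^2 \<le> \<Phi>^2" unfolding P2 power_mult_distrib
    using k A0 mult_left_le[OF k(2) k(1)] by (intro mult_left_mono) (auto simp: power2_eq_square)
  hence PA2: "A * (1 - r^2/4) \<le> \<Phi>" by (rule power2_le_imp_le[OF _ P0])
  have up: "T^2*a - \<Phi> \<le> 1/4"
  proof -
    have "T^2*a - \<Phi> \<le> T^2*r - A*(1 - r^2/4)" using PA2 ar T by (smt (verit) mult_left_mono zero_le_power2)
    also have "\<dots> = (T^2*r^2) * r / 4" unfolding A_def by (simp add: algebra_simps power2_eq_square)
    also have "\<dots> \<le> 1/4" using tr r1 rpos by (smt (verit) mult_le_one zero_le_mult_iff zero_le_power2 divide_right_mono)
    finally show ?thesis .
  qed
  have lo: "T^2*a - \<Phi> \<ge> -(3/4)"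
  proof -
    define u where "u = T*a"
    have u: "u \<ge> 1/2" using a unfolding u_def by simp
    have qq: "(r - a)*(r + a) = q" using r by (simp add: algebra_simps power2_eq_square)
    have "T^2*(r-a)*(2*a) \<le> T^2*(r-a)*(r+a)" using ar a by (intro mult_left_mono) auto
    also have "\<dots> = T^2 * q" using qq by simp
    finally have "T * (T^2*(r-a)*(2*a)) \<le> T * (T^2 * q)" using T by (intro mult_left_mono) auto
    hence "2 * u * (T^2*(r-a)) \<le> T^3 * q" unfolding u_def by (simp add: power2_eq_square power3_eq_cube algebra_simps)
    also have "T^3 * q < 1 - u^2" using sup unfolding u_def by (simp add: power_mult_distrib)
    finally have m: "2 * u * (T^2*(r-a)) < 1 - u^2" .
    have "0 \<le> (2*u-1)*(u+2)" using u by simp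
    moreover have "(2*u-1)*(u+2) = 2*u^2 + 3*u - 2" by (simp add: power2_eq_square algebra_simps)
    ultimately have "1 - u^2 \<le> 2 * u * (3/4)" by linarith
    hence "2 * u * (T^2*(r-a)) < 2 * u * (3/4)" using m by simp
    hence "T^2*(r-a) < 3/4" using u by simp
    thus ?thesis using PA unfolding A_def by (simp add: algebra_simps)
  qed
  show "\<bar>T^2*a - T^2 * (r^2/2) * sqrt (4/r^2 - 1)\<bar> \<le> 3/4" using up lo unfolding \<Phi>_def by linarith
qed




definition cc :: "real \<Rightarrow> 3 \<Rightarrow> real" where
  "cc t i = (if i = 1 then sqrt t else sqrt t * t powr (1/4))"

lemma Dt_eq: "sqrt t *\<^sub>R aniso t \<xi> = (\<chi> i. cc t i * \<xi>$i)"
  unfolding vec_eq_iff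
proof
  fix i :: 3
  show "(sqrt t *\<^sub>R aniso t \<xi>) $ i = (\<chi> i. cc t i * \<xi> $ i) $ i"
    using exhaust_3[of i] by (auto simp: aniso_def cc_def)
qed

lemma norm3: "norm (x::real^3) ^ 2 = x$1^2 + x$2^2 + x$3^2"
  unfolding norm_vec_def L2_set_def sum_3 by simp

lemma inner3: "(x::real^3) \<bullet> y = x$1*y$1 + x$2*y$2 + x$3*y$3"
  unfolding inner_vec_def sum_3 by simp

lemma Dt_minus: "sqrt t *\<^sub>R aniso t (-\<xi>) = - (sqrt t *\<^sub>R aniso t \<xi>)"
  unfolding Dt_eq by (simp add: vec_eq_iff)

lemma cc_sq: "t > 0 \<Longrightarrow> (sqrt t * t powr (1/4))^2 = sqrt t ^ 3"
proof -
  assume t: "t > 0"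
  have "(t powr (1/4))^2 = t powr (1/2)" using t by (simp add: power2_eq_square powr_add[symmetric])
  also have "\<dots> = sqrt t" using t by (simp add: powr_half_sqrt)
  finally have "(t powr (1/4))^2 = sqrt t" .
  hence "(sqrt t * t powr (1/4))^2 = sqrt t ^ 2 * sqrt t" by (simp add: power_mult_distrib)
  thus ?thesis by (simp add: power3_eq_cube power2_eq_square)
qed

lemma supp_facts:
  fixes Psi :: "real^3 \<Rightarrow> real"
  assumes supp: "tsupp Psi \<subseteq> {\<xi>. 1/2 < norm \<xi> \<and> norm \<xi> < 1 \<and> \<bar>\<xi>$1\<bar> \<ge> 1/2}"
    and t: "t \<ge> 1" and nz: "Psi (sqrt t *\<^sub>R aniso t \<xi>) \<noteq> 0"
  shows "sqrt t^2 * (\<xi>$1)^2 + sqrt t^3 * ((\<xi>$2)^2 + (\<xi>$3)^2) < 1"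
    "sqrt t * \<bar>\<xi>$1\<bar> \<ge> 1/2" "norm \<xi> ^ 2 = (\<xi>$1)^2 + ((\<xi>$2)^2 + (\<xi>$3)^2)"
proof -
  let ?\<eta> = "sqrt t *\<^sub>R aniso t \<xi>"
  have "?\<eta> \<in> tsupp Psi" unfolding tsupp_def using nz by (intro closure_subset[THEN subsetD]) simp
  hence s: "norm ?\<eta> < 1" "\<bar>?\<eta>$1\<bar> \<ge> 1/2" using supp by auto
  have e: "?\<eta>$1 = sqrt t * \<xi>$1" "?\<eta>$2 = sqrt t * t powr (1/4) * \<xi>$2" "?\<eta>$3 = sqrt t * t powr (1/4) * \<xi>$3"
    unfolding Dt_eq by (auto simp: cc_def)
  have "norm ?\<eta> ^ 2 < 1" using s(1) by (simp add: power_less_one_iff)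
  hence "(sqrt t * \<xi>$1)^2 + (sqrt t * t powr (1/4))^2 * ((\<xi>$2)^2 + (\<xi>$3)^2) < 1"
    unfolding norm3 e by (simp add: power_mult_distrib algebra_simps)
  thus "sqrt t^2 * (\<xi>$1)^2 + sqrt t^3 * ((\<xi>$2)^2 + (\<xi>$3)^2) < 1"
    using cc_sq[of t] t by (simp add: power_mult_distrib)
  show "sqrt t * \<bar>\<xi>$1\<bar> \<ge> 1/2" using s(2) e t by (simp add: abs_mult)
  show "norm \<xi> ^ 2 = (\<xi>$1)^2 + ((\<xi>$2)^2 + (\<xi>$3)^2)" by (simp add: norm3)
qed

lemma lam_polar:
  assumes "0 < norm \<xi>" "norm \<xi> < 2"
  shows "exp (complex_of_real t * lam \<sigma> \<xi>) =
    complex_of_real (exp (-(t * norm \<xi>^2/2))) * cis (-(\<sigma> * (t * (norm \<xi>^2/2) * sqrt (4/norm \<xi>^2 - 1))))"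
proof -
  let ?A = "-(t * norm \<xi>^2/2)" and ?B = "-(\<sigma> * (t * (norm \<xi>^2/2) * sqrt (4/norm \<xi>^2 - 1)))"
  have "complex_of_real t * lam \<sigma> \<xi> = complex_of_real ?A + \<i> * complex_of_real ?B"
    using assms unfolding lam_def by (simp add: algebra_simps)
  hence "exp (complex_of_real t * lam \<sigma> \<xi>) = exp (complex_of_real ?A) * exp (\<i> * complex_of_real ?B)"
    by (simp only: exp_add)
  also have "\<dots> = complex_of_real (exp ?A) * cis ?B" by (simp only: cis_conv_exp exp_of_real)
  finally show ?thesis .
qed




lemma half_pt:
  fixes Psi :: "real^3 \<Rightarrow> real"
  assumes supp: "tsupp Psi \<subseteq> {\<xi>. 1/2 < norm \<xi> \<and> norm \<xi> < 1 \<and> \<bar>\<xi>$1\<bar> \<ge> 1/2}"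
    and even: "\<And>\<xi>. Psi (- \<xi>) = Psi \<xi>" and nonneg: "\<And>\<xi>. Psi \<xi> \<ge> 0"
    and t: "t \<ge> 1" and sig: "\<sigma> \<in> {1, -1}" and y: "norm y \<le> 1/20"
    and nz: "Psi (sqrt t *\<^sub>R aniso t \<xi>) \<noteq> 0" and pos: "\<xi>$1 > 0"
  defines "g \<equiv> \<lambda>\<xi>. exp (complex_of_real t * lam \<sigma> \<xi>) * complex_of_real (Psi (sqrt t *\<^sub>R aniso t \<xi>))"
  defines "x0 \<equiv> (\<sigma>*t) *\<^sub>R axis 1 1 + y" and "x1 \<equiv> (\<sigma>*t - 2*pi/3 * sqrt t) *\<^sub>R axis 1 1 + y"
  defines "Hf \<equiv> \<lambda>\<xi>. g \<xi> * (cis (x0 \<bullet> \<xi>) + \<i> * cis (x1 \<bullet> \<xi>))"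
  shows "Re (Hf \<xi>) - norm (Hf (-\<xi>)) \<ge> exp (-1/2) / 4 * Psi (sqrt t *\<^sub>R aniso t \<xi>)"
proof -
  define T where "T = sqrt t"
  define a where "a = \<xi>$1"
  define q where "q = (\<xi>$2)^2 + (\<xi>$3)^2"
  define r where "r = norm \<xi>"
  define w where "w = Psi (sqrt t *\<^sub>R aniso t \<xi>)"
  have T1: "T \<ge> 1" using t unfolding T_def by simp
  have tT: "t = T^2" using t unfolding T_def by simp
  note sf = supp_facts[OF supp t nz]
  have sup: "T^2*a^2 + T^3*q < 1" using sf(1) unfolding T_def a_def q_def .
  have Ta: "T*a \<ge> 1/2" using sf(2) pos unfolding T_def a_def by simp
  have rq: "r^2 = a^2 + q" using sf(3) unfolding r_def a_def q_def .
  have q0: "q \<ge> 0" unfolding q_def by simp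
  note pb = phase_bound[OF T1 pos[folded a_def] Ta q0 sup _ rq]
  have r0: "r \<ge> 0" unfolding r_def by simp
  note pb = pb[OF r0]
  define \<Phi> where "\<Phi> = t * (r^2/2) * sqrt (4/r^2 - 1)"
  have Phib: "\<bar>t*a - \<Phi>\<bar> \<le> 3/4" using pb(1) unfolding \<Phi>_def tT .
  define E where "E = exp (-(t * r^2/2))"
  have rpos: "0 < norm \<xi>" "norm \<xi> < 2" using pb(3,4) unfolding r_def by auto
  have gx: "g \<xi> = complex_of_real (E*w) * cis (-(\<sigma> * \<Phi>))"
    unfolding g_def lam_polar[OF rpos] E_def w_def \<Phi>_def r_def by simp
  have gm: "g (-\<xi>) = g \<xi>"
    unfolding g_def Dt_minus even by (simp add: lam_def)
  define u where "u = T*a"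
  have u: "1/2 \<le> u" "u \<le> 1"
  proof -
    show "1/2 \<le> u" using Ta unfolding u_def .
    have "u^2 \<le> 1" using sup q0 T1 unfolding u_def by (simp add: power_mult_distrib) (smt (verit) zero_le_mult_iff zero_le_power)
    thus "u \<le> 1" using power2_le_imp_le[of u 1] by simp
  qed
  have xi0: "x0 \<bullet> \<xi> = \<sigma>*t*a + y \<bullet> \<xi>" unfolding x0_def a_def by (simp add: inner_add_left inner_axis')
  have xi1: "x1 \<bullet> \<xi> = x0 \<bullet> \<xi> + (-(2*pi/3) * u)" unfolding x1_def xi0 u_def T_def a_def
    by (simp add: inner_add_left inner_axis' algebra_simps)
  define \<psi> where "\<psi> = \<sigma>*(t*a - \<Phi>) + y \<bullet> \<xi>"
  have Hp: "Hf \<xi> = complex_of_real (E*w) * ((1 + \<i> * cis (-(2*pi/3) * u)) * cis \<psi>)"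
  proof -
    have "Hf \<xi> = complex_of_real (E*w) * (cis (-(\<sigma> * \<Phi>)) * cis (x0 \<bullet> \<xi>) * (1 + \<i> * cis (-(2*pi/3) * u)))"
      unfolding Hf_def gx xi1 cis_mult[symmetric] by (simp add: algebra_simps)
    also have "cis (-(\<sigma> * \<Phi>)) * cis (x0 \<bullet> \<xi>) = cis \<psi>" unfolding cis_mult xi0 \<psi>_def
      by (simp add: algebra_simps)
    finally show ?thesis by (simp add: mult.commute)
  qed
  have Hm: "Hf (-\<xi>) = complex_of_real (E*w) * (cis (-(\<sigma> * \<Phi>)) * cis (-(x0 \<bullet> \<xi>)) * (1 + \<i> * cis ((2*pi/3) * u)))"
    unfolding Hf_def gm gx inner_minus_right xi1 by (simp add: cis_mult algebra_simps)
  have Ew: "E*w \<ge> 0" unfolding E_def w_def using nonneg by simp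
  have nHm: "norm (Hf (-\<xi>)) = E*w * norm (1 + \<i> * cis ((2*pi/3) * u))"
    unfolding Hm norm_mult norm_of_real using Ew by simp
  have reHp: "Re (Hf \<xi>) = E*w * Re ((1 + \<i> * cis (-(2*pi/3) * u)) * cis \<psi>)"
    unfolding Hp by simp
  have yx: "\<bar>y \<bullet> \<xi>\<bar> \<le> 1/20"
  proof -
    have "\<bar>y \<bullet> \<xi>\<bar> \<le> norm y * norm \<xi>" by (rule Cauchy_Schwarz_ineq2)
    also have "\<dots> \<le> 1/20 * 1" using y pb(3) unfolding r_def by (intro mult_mono) auto
    finally show ?thesis by simp
  qed
  have psib: "\<bar>\<psi>\<bar> \<le> 4/5"
  proof -
    have "\<bar>\<sigma>*(t*a - \<Phi>)\<bar> \<le> 3/4" using sig Phib by (auto simp: abs_minus_commute)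
    thus ?thesis using yx unfolding \<psi>_def by linarith
  qed
  note K = K_bound[OF u psib]
  have E1: "E \<ge> exp (-1/2)" unfolding E_def using pb(2) tT by simp
  have "Re (Hf \<xi>) - norm (Hf (-\<xi>)) = E*w * (Re ((1 + \<i> * cis (-(2*pi/3) * u)) * cis \<psi>) - norm (1 + \<i> * cis ((2*pi/3) * u)))"
    unfolding reHp nHm by (simp add: algebra_simps)
  also have "\<dots> \<ge> E*w * (1/4)" using K Ew by (intro mult_left_mono) auto
  finally have "Re (Hf \<xi>) - norm (Hf (-\<xi>)) \<ge> E * w / 4" by simp
  moreover have "E * w / 4 \<ge> exp (-1/2) / 4 * w" using E1 nonneg[of "sqrt t *\<^sub>R aniso t \<xi>"] unfolding w_def
    by (simp add: mult_right_mono)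
  ultimately show ?thesis unfolding w_def by linarith
qed

lemma key_pt:
  fixes Psi :: "real^3 \<Rightarrow> real"
  assumes supp: "tsupp Psi \<subseteq> {\<xi>. 1/2 < norm \<xi> \<and> norm \<xi> < 1 \<and> \<bar>\<xi>$1\<bar> \<ge> 1/2}"
    and even: "\<And>\<xi>. Psi (- \<xi>) = Psi \<xi>" and nonneg: "\<And>\<xi>. Psi \<xi> \<ge> 0"
    and t: "t \<ge> 1" and sig: "\<sigma> \<in> {1, -1}" and y: "norm y \<le> 1/20"
  defines "g \<equiv> \<lambda>\<xi>. exp (complex_of_real t * lam \<sigma> \<xi>) * complex_of_real (Psi (sqrt t *\<^sub>R aniso t \<xi>))"
  defines "x0 \<equiv> (\<sigma>*t) *\<^sub>R axis 1 1 + y" and "x1 \<equiv> (\<sigma>*t - 2*pi/3 * sqrt t) *\<^sub>R axis 1 1 + y"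
  defines "Hf \<equiv> \<lambda>\<xi>. g \<xi> * (cis (x0 \<bullet> \<xi>) + \<i> * cis (x1 \<bullet> \<xi>))"
  shows "Re (Hf \<xi> + Hf (-\<xi>)) \<ge> exp (-1/2) / 4 * Psi (sqrt t *\<^sub>R aniso t \<xi>)"
proof (cases "Psi (sqrt t *\<^sub>R aniso t \<xi>) = 0")
  case True
  hence "Psi (sqrt t *\<^sub>R aniso t (-\<xi>)) = 0" unfolding Dt_minus even .
  with True show ?thesis unfolding Hf_def g_def by simp
next
  case False
  note hp = half_pt[OF supp even nonneg t sig y, folded x0_def x1_def]
  have "sqrt t * \<bar>\<xi>$1\<bar> \<ge> 1/2" using supp_facts[OF supp t False] by simp
  hence "\<xi>$1 \<noteq> 0" by auto
  then consider "\<xi>$1 > 0" | "(-\<xi>)$1 > 0" by fastforce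
  thus ?thesis
  proof cases
    case 1
    have "Re (Hf \<xi>) - norm (Hf (-\<xi>)) \<ge> exp (-1/2) / 4 * Psi (sqrt t *\<^sub>R aniso t \<xi>)"
      using hp[OF False 1] unfolding Hf_def g_def .
    moreover have "- norm (Hf (-\<xi>)) \<le> Re (Hf (-\<xi>))" using abs_Re_le_cmod[of "Hf (-\<xi>)"] by linarith
    ultimately show ?thesis by simp
  next
    case 2
    have nz: "Psi (sqrt t *\<^sub>R aniso t (-\<xi>)) \<noteq> 0" using False unfolding Dt_minus even .
    have "Re (Hf (-\<xi>)) - norm (Hf (-(-\<xi>))) \<ge> exp (-1/2) / 4 * Psi (sqrt t *\<^sub>R aniso t (-\<xi>))"
      using hp[OF nz 2] unfolding Hf_def g_def .
    moreover have "- norm (Hf \<xi>) \<le> Re (Hf \<xi>)" using abs_Re_le_cmod[of "Hf \<xi>"] by linarith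
    ultimately show ?thesis unfolding Dt_minus even by simp
  qed
qed




lemma Psi_cont: "smooth_fun Psi \<Longrightarrow> continuous_on UNIV Psi"
  by (erule smooth_fun.cases) (auto intro: differentiable_imp_continuous_on)

lemma lborel_reflect: "lborel = distr lborel borel (\<lambda>x::'a::euclidean_space. -x)"
  using lborel_affine[of "-1" "0::'a"] by (simp add: density_1)

lemma reflect:
  fixes h :: "'a::euclidean_space \<Rightarrow> 'b::{banach, second_countable_topology}"
  assumes "integrable lborel h"
  shows "integrable lborel (\<lambda>x. h (-x))" "integral\<^sup>L lborel (\<lambda>x. h (-x)) = integral\<^sup>L lborel h"
proof -
  have m: "h \<in> borel_measurable borel" using borel_measurable_integrable[OF assms] by simp
  have um: "(\<lambda>x::'a. -x) \<in> measurable lborel borel" by simp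
  have "integrable (distr lborel borel (\<lambda>x::'a. -x)) h" using assms lborel_reflect by metis
  thus "integrable lborel (\<lambda>x. h (-x))" using integrable_distr_eq[OF um m] by simp
  have "integral\<^sup>L lborel h = integral\<^sup>L (distr lborel borel (\<lambda>x::'a. -x)) h" using lborel_reflect by metis
  also have "\<dots> = integral\<^sup>L lborel (\<lambda>x. h (-x))" by (rule integral_distr[OF um m])
  finally show "integral\<^sup>L lborel (\<lambda>x. h (-x)) = integral\<^sup>L lborel h" by simp
qed

lemma cc_pos: "t \<ge> 1 \<Longrightarrow> cc t i \<ge> 1"
proof -
  assume t: "t \<ge> 1"
  have a: "1 \<le> sqrt t" using t by simp
  have b: "1 \<le> t powr (1/4)" using t by (simp add: ge_one_powr_ge_zero)
  have "1 * 1 \<le> sqrt t * t powr (1/4)" by (rule mult_mono[OF a b]) (use t in auto)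
  thus ?thesis using a unfolding cc_def by auto
qed

lemma integ:
  fixes Psi :: "real^3 \<Rightarrow> real"
  assumes cont: "continuous_on UNIV Psi" and cpt: "compact (tsupp Psi)"
    and supp: "tsupp Psi \<subseteq> {\<xi>. 1/2 < norm \<xi> \<and> norm \<xi> < 1 \<and> \<bar>\<xi>$1\<bar> \<ge> 1/2}"
    and t: "t \<ge> 1"
  shows "integrable lborel (\<lambda>\<xi>. cis (x \<bullet> \<xi>) * (exp (complex_of_real t * lam \<sigma> \<xi>) * complex_of_real (Psi (sqrt t *\<^sub>R aniso t \<xi>))))"
    "integrable lborel (\<lambda>\<xi>. Psi (sqrt t *\<^sub>R aniso t \<xi>))"
proof -
  define Di where "Di = (\<lambda>\<eta>::real^3. \<chi> i. \<eta>$i / cc t i)"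
  have ccp: "cc t i > 0" for i using cc_pos[OF t, of i] by simp
  have ccn: "cc t i \<noteq> 0" for i using ccp[of i] by simp
  have DD: "sqrt t *\<^sub>R aniso t (Di \<eta>) = \<eta>" for \<eta> unfolding Dt_eq Di_def using ccn
    by (simp add: vec_eq_iff)
  have DD2: "Di (sqrt t *\<^sub>R aniso t \<xi>) = \<xi>" for \<xi> unfolding Dt_eq Di_def using ccn
    by (simp add: vec_eq_iff)
  define S where "S = Di ` tsupp Psi"
  have cS: "compact S" unfolding S_def Di_def
    by (intro compact_continuous_image cpt continuous_intros) (simp add: ccn)
  have inS: "\<xi> \<in> S \<longleftrightarrow> sqrt t *\<^sub>R aniso t \<xi> \<in> tsupp Psi" for \<xi>
    unfolding S_def using DD DD2 by (metis image_iff)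
  have cD: "continuous_on UNIV (\<lambda>\<xi>. sqrt t *\<^sub>R aniso t \<xi>)" unfolding Dt_eq
    by (intro continuous_intros)
  have cW: "continuous_on UNIV (\<lambda>\<xi>. Psi (sqrt t *\<^sub>R aniso t \<xi>))"
    by (rule continuous_on_compose2[OF cont cD]) auto
  have zero: "Psi (sqrt t *\<^sub>R aniso t \<xi>) = 0" if "\<xi> \<notin> S" for \<xi>
    using that inS unfolding tsupp_def by (metis (mono_tags) closure_subset mem_Collect_eq subsetD)
  have nS: "0 < norm \<xi> \<and> norm \<xi> < 1" if "\<xi> \<in> S" for \<xi>
  proof -
    let ?\<eta> = "sqrt t *\<^sub>R aniso t \<xi>"
    have "?\<eta> \<in> tsupp Psi" using that inS by simp
    hence s: "1/2 < norm ?\<eta>" "norm ?\<eta> < 1" using supp by auto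
    have le: "(\<xi>$i)^2 \<le> (?\<eta>$i)^2" for i
    proof -
      have "?\<eta>$i = cc t i * \<xi>$i" unfolding Dt_eq by simp
      moreover have "1 * \<xi>$i^2 \<le> (cc t i)^2 * \<xi>$i^2" using cc_pos[OF t, of i]
        by (intro mult_right_mono) (auto simp: one_le_power)
      ultimately show ?thesis by (simp add: power_mult_distrib)
    qed
    have "norm \<xi> ^ 2 \<le> norm ?\<eta> ^ 2" unfolding norm3 using le[of 1] le[of 2] le[of 3] by linarith
    hence n1: "norm \<xi> \<le> norm ?\<eta>" by (rule power2_le_imp_le) simp
    have "\<xi> \<noteq> 0"
    proof
      assume "\<xi> = 0" hence "?\<eta> = 0" by (simp add: Dt_eq vec_eq_iff)
      with s(1) show False by simp
    qed
    thus ?thesis using n1 s by auto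
  qed
  show "integrable lborel (\<lambda>\<xi>. Psi (sqrt t *\<^sub>R aniso t \<xi>))"
  proof -
    have "integrable lborel (\<lambda>\<xi>. indicator S \<xi> *\<^sub>R Psi (sqrt t *\<^sub>R aniso t \<xi>))"
      by (rule borel_integrable_compact[OF cS continuous_on_subset[OF cW]]) auto
    moreover have "(\<lambda>\<xi>. indicator S \<xi> *\<^sub>R Psi (sqrt t *\<^sub>R aniso t \<xi>)) = (\<lambda>\<xi>. Psi (sqrt t *\<^sub>R aniso t \<xi>))"
    proof
      fix \<xi> show "indicator S \<xi> *\<^sub>R Psi (sqrt t *\<^sub>R aniso t \<xi>) = Psi (sqrt t *\<^sub>R aniso t \<xi>)"
        using zero[of \<xi>] by (cases "\<xi> \<in> S") simp_all
    qed
    ultimately show ?thesis by simp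
  qed
  let ?F = "\<lambda>\<xi>. cis (x \<bullet> \<xi>) * (exp (complex_of_real t * lam \<sigma> \<xi>) * complex_of_real (Psi (sqrt t *\<^sub>R aniso t \<xi>)))"
  let ?G = "\<lambda>\<xi>. cis (x \<bullet> \<xi>) * (exp (complex_of_real t * (- complex_of_real (norm \<xi> ^ 2 / 2) * (1 + complex_of_real \<sigma> * \<i> * complex_of_real (sqrt (4 / norm \<xi> ^ 2 - 1))))) * complex_of_real (Psi (sqrt t *\<^sub>R aniso t \<xi>)))"
  have cG: "continuous_on S ?G"
    using nS by (intro continuous_intros continuous_on_subset[OF cW]) auto
  have cF: "continuous_on S ?F"
  proof (rule continuous_on_eq[OF cG])
    fix \<xi> assume "\<xi> \<in> S"
    hence "norm \<xi> < 2" using nS[of \<xi>] by simp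
    thus "?G \<xi> = ?F \<xi>" by (simp add: lam_def)
  qed
  have "integrable lborel (\<lambda>\<xi>. indicator S \<xi> *\<^sub>R ?F \<xi>)"
    by (rule borel_integrable_compact[OF cS cF])
  moreover have "(\<lambda>\<xi>. indicator S \<xi> *\<^sub>R ?F \<xi>) = ?F"
  proof
    fix \<xi> show "indicator S \<xi> *\<^sub>R ?F \<xi> = ?F \<xi>"
      using zero[of \<xi>] by (cases "\<xi> \<in> S") simp_all
  qed
  ultimately show "integrable lborel ?F" by simp
qed




lemma int_lb:
  fixes Psi :: "real^3 \<Rightarrow> real"
  assumes cont: "continuous_on UNIV Psi" and nonneg: "\<And>\<xi>. Psi \<xi> \<ge> 0" and p0: "Psi \<xi>0 > 0"
    and integ: "\<And>t. t \<ge> 1 \<Longrightarrow> integrable lborel (\<lambda>\<xi>. Psi (sqrt t *\<^sub>R aniso t \<xi>))"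
  shows "\<exists>c>0. \<forall>t\<ge>1. integral\<^sup>L lborel (\<lambda>\<xi>. Psi (sqrt t *\<^sub>R aniso t \<xi>)) \<ge> c * t powr (-2)"
proof -
  define m where "m = Psi \<xi>0 / 2"
  have m0: "m > 0" using p0 unfolding m_def by simp
  obtain \<delta> where d0: "\<delta> > 0" and dd: "\<And>x'. dist x' \<xi>0 < \<delta> \<Longrightarrow> dist (Psi x') (Psi \<xi>0) < m"
    using cont m0 unfolding continuous_on_iff by (metis UNIV_I)
  define d where "d = \<delta>/4"
  have dpos: "d > 0" using d0 unfolding d_def by simp
  show ?thesis
  proof (intro exI[of _ "m * (8 * d^3)"] conjI allI impI)
    show "m * (8 * d^3) > 0" using m0 dpos by simp
    fix t :: real assume t: "t \<ge> 1"
    have ccp: "cc t i > 0" for i using cc_pos[OF t, of i] by simp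
    define lo where "lo = (\<chi> i. (\<xi>0$i - d) / cc t i)"
    define hi where "hi = (\<chi> i. (\<xi>0$i + d) / cc t i)"
    define B where "B = cbox lo hi"
    have inB: "m \<le> Psi (sqrt t *\<^sub>R aniso t \<xi>)" if "\<xi> \<in> B" for \<xi>
    proof -
      let ?\<eta> = "sqrt t *\<^sub>R aniso t \<xi>"
      have c: "\<bar>?\<eta>$i - \<xi>0$i\<bar> \<le> d" for i
      proof -
        have "lo$i \<le> \<xi>$i" "\<xi>$i \<le> hi$i" using that unfolding B_def mem_box_cart by auto
        hence "\<xi>0$i - d \<le> cc t i * \<xi>$i" "cc t i * \<xi>$i \<le> \<xi>0$i + d"
          unfolding lo_def hi_def using ccp[of i] by (auto simp: field_simps)
        thus ?thesis unfolding Dt_eq by simp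
      qed
      have "dist ?\<eta> \<xi>0 = norm (?\<eta> - \<xi>0)" by (simp add: dist_norm)
      also have "\<dots> \<le> (\<Sum>i\<in>UNIV. \<bar>(?\<eta> - \<xi>0)$i\<bar>)" by (rule norm_le_l1_cart)
      also have "\<dots> \<le> 3 * d" unfolding sum_3 using c[of 1] c[of 2] c[of 3] by simp
      also have "\<dots> < \<delta>" using dpos unfolding d_def by simp
      finally have "dist (Psi ?\<eta>) (Psi \<xi>0) < m" by (rule dd)
      thus ?thesis unfolding m_def dist_real_def by linarith
    qed
    have "integral\<^sup>L lborel (\<lambda>\<xi>. m * indicator B \<xi>) \<le> integral\<^sup>L lborel (\<lambda>\<xi>. Psi (sqrt t *\<^sub>R aniso t \<xi>))"
    proof (rule integral_mono'[OF integ[OF t]])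
      fix \<xi> show "m * indicator B \<xi> \<le> Psi (sqrt t *\<^sub>R aniso t \<xi>)"
        using inB[of \<xi>] nonneg by (cases "\<xi> \<in> B") auto
    qed (use nonneg in auto)
    moreover have "integral\<^sup>L lborel (\<lambda>\<xi>. m * indicator B \<xi>) = m * measure lborel B" by simp
    moreover have "measure lborel B = 8 * d^3 * t powr (-2)"
    proof -
      have ne: "B \<noteq> {}" unfolding B_def
      proof -
        have "lo \<in> cbox lo hi" unfolding mem_box_cart lo_def hi_def using ccp dpos
          by (auto intro!: divide_right_mono simp: less_imp_le)
        thus "cbox lo hi \<noteq> {}" by auto
      qed
      have "measure lborel B = (\<Prod>i\<in>UNIV. hi$i - lo$i)" unfolding B_def
        by (rule content_cbox_cart[OF ne[unfolded B_def]])
      also have "\<dots> = (2*d / cc t 1) * (2*d / cc t 2) * (2*d / cc t 3)"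
        unfolding UNIV_3 lo_def hi_def by (simp add: diff_divide_distrib[symmetric])
      also have "\<dots> = 8 * d^3 / (sqrt t * (sqrt t * t powr (1/4))^2)"
        unfolding cc_def by (simp add: power2_eq_square power3_eq_cube)
      also have "\<dots> = 8 * d^3 / t^2"
      proof -
        have e: "(sqrt t * t powr (1/4))^2 = sqrt t^3" by (rule cc_sq) (use t in simp)
        have "sqrt t * sqrt t^3 = (sqrt t^2)^2" by (simp only: power2_eq_square power3_eq_cube mult.assoc)
        also have "\<dots> = t^2" using t by simp
        finally show ?thesis unfolding e by simp
      qed
      also have "\<dots> = 8 * d^3 * t powr (-2)" using t by (simp add: powr_minus powr_realpow divide_inverse)
      finally show ?thesis .
    qed
    ultimately show "m * (8 * d^3) * t powr (-2) \<le> integral\<^sup>L lborel (\<lambda>\<xi>. Psi (sqrt t *\<^sub>R aniso t \<xi>))"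
      by (simp add: mult.assoc)
  qed
qed

theorem proposition3p4:
  fixes Psi :: "real^3 \<Rightarrow> real"
  assumes smooth: "smooth_fun Psi"
    and cpt: "compact (tsupp Psi)"
    and nonneg: "\<And>\<xi>. Psi \<xi> \<ge> 0"
    and nonzero: "\<exists>\<xi>. Psi \<xi> \<noteq> 0"
    and even: "\<And>\<xi>. Psi (- \<xi>) = Psi \<xi>"
    and supp: "tsupp Psi \<subseteq> {\<xi>. 1/2 < norm \<xi> \<and> norm \<xi> < 1 \<and> \<bar>\<xi>$1\<bar> \<ge> 1/2}"
  shows "\<forall>\<sigma>\<in>{1, -1::real}. \<exists>C>0. \<forall>\<^sub>F t in at_top.
     Linf_norm (invFT (\<lambda>\<xi>. exp (complex_of_real t * lam \<sigma> \<xi>) *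
                             complex_of_real (Psi (sqrt t *\<^sub>R aniso t \<xi>))))
       \<ge> ereal (C * t powr (-2))"
proof
  fix \<sigma> :: real assume sig: "\<sigma> \<in> {1, -1}"
  have cont: "continuous_on UNIV Psi" by (rule Psi_cont[OF smooth])
  obtain \<xi>0 where "Psi \<xi>0 \<noteq> 0" using nonzero by blast
  hence p0: "Psi \<xi>0 > 0" using nonneg[of \<xi>0] by simp
  note integW = integ(2)[OF cont cpt supp]
  obtain c where c0: "c > 0" and cb: "\<And>t. t \<ge> 1 \<Longrightarrow> integral\<^sup>L lborel (\<lambda>\<xi>. Psi (sqrt t *\<^sub>R aniso t \<xi>)) \<ge> c * t powr (-2)"
    using int_lb[OF cont nonneg p0 integW] by blast
  define k where "k = (2 * pi) powr (-3/2)"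
  have k0: "k > 0" unfolding k_def by simp
  define C where "C = k * exp (-1/2) / 16 * c"
  have C0: "C > 0" unfolding C_def using k0 c0 by simp
  show "\<exists>C>0. \<forall>\<^sub>F t in at_top.
     Linf_norm (invFT (\<lambda>\<xi>. exp (complex_of_real t * lam \<sigma> \<xi>) *
                             complex_of_real (Psi (sqrt t *\<^sub>R aniso t \<xi>))))
       \<ge> ereal (C * t powr (-2))"
  proof (intro exI[of _ C] conjI C0 eventually_at_top_linorderI[of 1])
    fix t :: real assume t: "t \<ge> 1"
    define g where "g = (\<lambda>\<xi>. exp (complex_of_real t * lam \<sigma> \<xi>) * complex_of_real (Psi (sqrt t *\<^sub>R aniso t \<xi>)))"
    define b0 where "b0 = (\<sigma>*t) *\<^sub>R (axis 1 1 :: real^3)"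
    define b1 where "b1 = (\<sigma>*t - 2*pi/3 * sqrt t) *\<^sub>R (axis 1 1 :: real^3)"
    have intg: "integrable lborel (\<lambda>\<xi>. cis (x \<bullet> \<xi>) * g \<xi>)" for x
      unfolding g_def by (rule integ(1)[OF cont cpt supp t])
    have main: "C * t powr (-2) \<le> norm (invFT g (b0 + y)) \<or> C * t powr (-2) \<le> norm (invFT g (b1 + y))"
      if y: "norm y < 1/20" for y
    proof -
      define x0 where "x0 = b0 + y"
      define x1 where "x1 = b1 + y"
      define Hf where "Hf = (\<lambda>\<xi>. g \<xi> * (cis (x0 \<bullet> \<xi>) + \<i> * cis (x1 \<bullet> \<xi>)))"
      define I0 where "I0 = integral\<^sup>L lborel (\<lambda>\<xi>. cis (x0 \<bullet> \<xi>) * g \<xi>)"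
      define I1 where "I1 = integral\<^sup>L lborel (\<lambda>\<xi>. cis (x1 \<bullet> \<xi>) * g \<xi>)"
      have Hf_eq: "Hf = (\<lambda>\<xi>. cis (x0 \<bullet> \<xi>) * g \<xi> + \<i> * (cis (x1 \<bullet> \<xi>) * g \<xi>))"
        unfolding Hf_def by (simp add: algebra_simps)
      have i1: "integrable lborel (\<lambda>\<xi>. \<i> * (cis (x1 \<bullet> \<xi>) * g \<xi>))" using intg[of x1] by simp
      have iH: "integrable lborel Hf" unfolding Hf_eq by (rule Bochner_Integration.integrable_add[OF intg[of x0] i1])
      have IH: "integral\<^sup>L lborel Hf = I0 + \<i> * I1" unfolding Hf_eq I0_def I1_def
        using intg by (simp add: Bochner_Integration.integral_add)
      note rf = reflect[OF iH]
      have iS: "integrable lborel (\<lambda>\<xi>. Hf \<xi> + Hf (-\<xi>))" using iH rf(1) by (rule Bochner_Integration.integrable_add)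
      have IS: "integral\<^sup>L lborel (\<lambda>\<xi>. Hf \<xi> + Hf (-\<xi>)) = 2 * (I0 + \<i> * I1)"
        using iH rf by (simp add: Bochner_Integration.integral_add IH)
      have "integral\<^sup>L lborel (\<lambda>\<xi>. exp (-1/2) / 4 * Psi (sqrt t *\<^sub>R aniso t \<xi>)) \<le> integral\<^sup>L lborel (\<lambda>\<xi>. Re (Hf \<xi> + Hf (-\<xi>)))"
      proof (rule Bochner_Integration.integral_mono)
        show "integrable lborel (\<lambda>\<xi>. exp (-1/2) / 4 * Psi (sqrt t *\<^sub>R aniso t \<xi>))"
          using integW[OF t] by simp
        show "integrable lborel (\<lambda>\<xi>. Re (Hf \<xi> + Hf (-\<xi>)))" by (rule integrable_Re[OF iS])
        fix \<xi> show "exp (-1/2) / 4 * Psi (sqrt t *\<^sub>R aniso t \<xi>) \<le> Re (Hf \<xi> + Hf (-\<xi>))"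
          using key_pt[OF supp even nonneg t sig, of y \<xi>] y unfolding Hf_def g_def x0_def x1_def b0_def b1_def
          by simp
      qed
      also have "\<dots> = 2 * Re (I0 + \<i> * I1)" unfolding integral_Re[OF iS] IS by simp
      finally have A: "exp (-1/2) / 4 * integral\<^sup>L lborel (\<lambda>\<xi>. Psi (sqrt t *\<^sub>R aniso t \<xi>)) \<le> 2 * Re (I0 + \<i> * I1)"
        by simp
      have B: "exp (-1/2) / 4 * (c * t powr (-2)) \<le> exp (-1/2) / 4 * integral\<^sup>L lborel (\<lambda>\<xi>. Psi (sqrt t *\<^sub>R aniso t \<xi>))"
        by (rule mult_left_mono[OF cb[OF t]]) simp
      have e: "exp (-1/2) / 8 * c * t powr (-2) = (exp (-1/2) / 4 * (c * t powr (-2))) / 2" by simp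
      have R: "exp (-1/2) / 8 * c * t powr (-2) \<le> Re (I0 + \<i> * I1)" unfolding e using A B by linarith
      have "Re (I0 + \<i> * I1) \<le> norm (I0 + \<i> * I1)" by (rule complex_Re_le_cmod)
      also have "\<dots> \<le> norm I0 + norm I1" by (rule norm_triangle_le) (simp add: norm_mult)
      finally have "exp (-1/2) / 8 * c * t powr (-2) \<le> norm I0 + norm I1" using R by linarith
      hence "k * (exp (-1/2) / 8 * c * t powr (-2)) \<le> k * norm I0 + k * norm I1"
        using k0 by (simp add: distrib_left[symmetric])
      moreover have "norm (invFT g x0) = k * norm I0" "norm (invFT g x1) = k * norm I1"
        unfolding invFT_def I0_def I1_def k_def by (simp_all add: norm_mult)
      ultimately have "2 * (C * t powr (-2)) \<le> norm (invFT g x0) + norm (invFT g x1)"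
        unfolding C_def by (simp add: algebra_simps)
      thus ?thesis unfolding x0_def x1_def by linarith
    qed
    have "ereal (C * t powr (-2)) \<le> esssup lborel (\<lambda>x. ereal (norm (invFT g x)))"
      by (rule ess_lower[of "1/20", OF _ main]) simp_all
    thus "ereal (C * t powr (-2)) \<le> Linf_norm (invFT g)" unfolding Linf_norm_def .
  qed
qed


end
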